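(* Let $S\subseteq(0,1)$ be open, $f:S\to(0,1)$ differentiable, and consider a (possibly randomized) Bernoulli factory for $f$ that is fast. For $n\in\mathbb N$ let $\varphi_{n,1}(p)=\Pr[N=n,\ Y=1]$ when the inputs have parameter $p$. Then each $\varphi_{n,1}$ is differentiable on $S$ and the series $\sum_{n=1}^\infty \partial\varphi_{n,1}(p)/\partial p$ converges uniformly on every closed interval $[\zeta,\eta]\subseteq S$.
   Context: Let $X=(X_i)$ be i.i.d. Bernoulli with parameter $p\in S$ and $U=(U_i)$ i.i.d. uniform on $(0,1)$, independent of $X$. A (possibly randomized) Bernoulli factory for $f$ consists of measurable stopping functions $\tau_i(x_1,u_1;\dots;x_i,u_i)\in\{0,1\}$ and measurable output functions $\gamma_n(x_1,u_1;\dots;x_n,u_n)\in\{0,1\}$; $N=\min\{i:\tau_i(X_1,U_1;\dots;X_i,U_i)=1\}$ is assumed finite almost surely, and the output $Y=\gamma_N(X_1,U_1;\dots;X_N,U_N)$ satisfies $\Pr[Y=1]=f(p)$ for all $p\in S$. The factory is fast if for every $p\in S$ there exist $A>0$, $\beta<1$ with $\Pr[N>n]\le A\beta^n$ for all $n$. *)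

theory Defs
  imports "HOL-Probability.Probability"
begin

definition input_measure :: "real \<Rightarrow> (bool \<times> real) measure" where
  "input_measure p = measure_pmf (bernoulli_pmf p) \<Otimes>\<^sub>M uniform_measure lborel {0<..<1}"

text \<open>The whole input sequence; index i (0-based) holds the pair (X_(i+1), U_(i+1)).\<close>
definition seq_space :: "real \<Rightarrow> (nat \<Rightarrow> bool \<times> real) measure" where
  "seq_space p = (\<Pi>\<^sub>M i\<in>(UNIV::nat set). input_measure p)"

definition hist_space :: "nat \<Rightarrow> (nat \<Rightarrow> bool \<times> real) measure" where
  "hist_space n = (\<Pi>\<^sub>M i\<in>{..<n}. (count_space UNIV \<Otimes>\<^sub>M (borel :: real measure)))"

definition stops_at :: "(nat \<Rightarrow> (nat \<Rightarrow> bool \<times> real) \<Rightarrow> bool) \<Rightarrow> nat \<Rightarrow> (nat \<Rightarrow> bool \<times> real) \<Rightarrow> bool" where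
  "stops_at \<tau> n \<omega> = \<tau> n (restrict \<omega> {..<n})"

definition first_stop :: "(nat \<Rightarrow> (nat \<Rightarrow> bool \<times> real) \<Rightarrow> bool) \<Rightarrow> nat \<Rightarrow> (nat \<Rightarrow> bool \<times> real) \<Rightarrow> bool" where
  "first_stop \<tau> n \<omega> = (1 \<le> n \<and> stops_at \<tau> n \<omega> \<and> (\<forall>k\<in>{1..<n}. \<not> stops_at \<tau> k \<omega>))"

definition stop_time :: "(nat \<Rightarrow> (nat \<Rightarrow> bool \<times> real) \<Rightarrow> bool) \<Rightarrow> (nat \<Rightarrow> bool \<times> real) \<Rightarrow> nat" where
  "stop_time \<tau> \<omega> = (LEAST n. 1 \<le> n \<and> stops_at \<tau> n \<omega>)"

definition factory_output ::
  "(nat \<Rightarrow> (nat \<Rightarrow> bool \<times> real) \<Rightarrow> bool) \<Rightarrow> (nat \<Rightarrow> (nat \<Rightarrow> bool \<times> real) \<Rightarrow> bool) \<Rightarrow> (nat \<Rightarrow> bool \<times> real) \<Rightarrow> bool" where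
  "factory_output \<tau> \<gamma> \<omega> = \<gamma> (stop_time \<tau> \<omega>) (restrict \<omega> {..<stop_time \<tau> \<omega>})"

definition bernoulli_factory ::
  "real set \<Rightarrow> (real \<Rightarrow> real) \<Rightarrow> (nat \<Rightarrow> (nat \<Rightarrow> bool \<times> real) \<Rightarrow> bool) \<Rightarrow> (nat \<Rightarrow> (nat \<Rightarrow> bool \<times> real) \<Rightarrow> bool) \<Rightarrow> bool" where
  "bernoulli_factory S f \<tau> \<gamma> \<longleftrightarrow>
     (\<forall>n. \<tau> n \<in> hist_space n \<rightarrow>\<^sub>M count_space UNIV) \<and>
     (\<forall>n. \<gamma> n \<in> hist_space n \<rightarrow>\<^sub>M count_space UNIV) \<and>
     (\<forall>p\<in>S. AE \<omega> in seq_space p. \<exists>n\<ge>1. stops_at \<tau> n \<omega>) \<and>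
     (\<forall>p\<in>S. measure (seq_space p) {\<omega> \<in> space (seq_space p). factory_output \<tau> \<gamma> \<omega>} = f p)"

definition fast_factory :: "real set \<Rightarrow> (nat \<Rightarrow> (nat \<Rightarrow> bool \<times> real) \<Rightarrow> bool) \<Rightarrow> bool" where
  "fast_factory S \<tau> \<longleftrightarrow>
     (\<forall>p\<in>S. \<exists>A>0. \<exists>\<beta><1. \<forall>n::nat.
        measure (seq_space p) {\<omega> \<in> space (seq_space p). \<forall>k\<in>{1..n}. \<not> stops_at \<tau> k \<omega>} \<le> A * \<beta> ^ n)"

definition phi1 ::
  "(nat \<Rightarrow> (nat \<Rightarrow> bool \<times> real) \<Rightarrow> bool) \<Rightarrow> (nat \<Rightarrow> (nat \<Rightarrow> bool \<times> real) \<Rightarrow> bool) \<Rightarrow> nat \<Rightarrow> real \<Rightarrow> real" where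
  "phi1 \<tau> \<gamma> n p = measure (seq_space p)
     {\<omega> \<in> space (seq_space p). first_stop \<tau> n \<omega> \<and> \<gamma> n (restrict \<omega> {..<n})}"

end

theory Submission
  imports Defs
begin


lemma sets_input: "sets (input_measure p) = sets (count_space UNIV \<Otimes>\<^sub>M (borel::real measure))"
  unfolding input_measure_def by (intro sets_pair_measure_cong) auto

lemma space_input: "space (input_measure p) = UNIV"
  unfolding input_measure_def by (simp add: space_pair_measure)

lemma prob_input: "prob_space (input_measure p)"
  unfolding input_measure_def
  by (intro prob_space_pair prob_space_measure_pmf prob_space_uniform_measure) auto

lemma prob_seq: "prob_space (seq_space p)"
  unfolding seq_space_def by (intro prob_space_PiM prob_input)

lemma space_hist: "space (hist_space n) = {..<n} \<rightarrow>\<^sub>E UNIV"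
  unfolding hist_space_def by (simp add: space_PiM space_pair_measure)

lemma space_seq: "space (seq_space p) = UNIV"
  unfolding seq_space_def by (simp add: space_PiM space_input)

lemma restrict_meas: "(\<lambda>\<omega>. restrict \<omega> {..<n}) \<in> seq_space p \<rightarrow>\<^sub>M hist_space n"
proof -
  have "(\<lambda>\<omega>. restrict \<omega> {..<n}) \<in> seq_space p \<rightarrow>\<^sub>M PiM {..<n} (\<lambda>_. input_measure p)"
    unfolding seq_space_def by (rule measurable_restrict_subset) auto
  moreover have "sets (PiM {..<n} (\<lambda>_. input_measure p)) = sets (hist_space n)"
    unfolding hist_space_def by (intro sets_PiM_cong) (auto simp: sets_input)
  ultimately show ?thesis using measurable_cong_sets[OF refl] by blast
qed

lemma measure_restrict:
  assumes B: "B \<in> sets (hist_space n)"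
  shows "measure (seq_space p) {\<omega>\<in>space (seq_space p). restrict \<omega> {..<n} \<in> B}
       = measure (PiM {..<n} (\<lambda>_. input_measure p)) B"
proof -
  interpret product_prob_space "\<lambda>_. input_measure p" UNIV
    by (intro product_prob_spaceI prob_input)
  have sets_eq: "sets (PiM {..<n} (\<lambda>_. input_measure p)) = sets (hist_space n)"
    unfolding hist_space_def by (intro sets_PiM_cong) (auto simp: sets_input)
  have m: "(\<lambda>\<omega>. restrict \<omega> {..<n}) \<in> seq_space p \<rightarrow>\<^sub>M PiM {..<n} (\<lambda>_. input_measure p)"
    unfolding seq_space_def by (rule measurable_restrict_subset) auto
  have "measure (PiM {..<n} (\<lambda>_. input_measure p)) B =
        measure (distr (seq_space p) (PiM {..<n} (\<lambda>_. input_measure p)) (\<lambda>x. restrict x {..<n})) B"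
    unfolding seq_space_def by (subst distr_PiM_restrict_finite) auto
  also have "\<dots> = measure (seq_space p) ((\<lambda>x. restrict x {..<n}) -` B \<inter> space (seq_space p))"
    using B sets_eq by (intro measure_distr m) auto
  finally show ?thesis by (simp add: vimage_def Int_def conj_commute)
qed



definition Q :: "nat \<Rightarrow> (nat set \<Rightarrow> real) \<Rightarrow> real \<Rightarrow> real" where
  "Q n c p = (\<Sum>S\<in>Pow {..<n}. c S * (p ^ card S * (1 - p) ^ (n - card S)))"

definition Q' :: "nat \<Rightarrow> (nat set \<Rightarrow> real) \<Rightarrow> real \<Rightarrow> real" where
  "Q' n c p = (\<Sum>S\<in>Pow {..<n}. c S * (real (card S) * p ^ (card S - 1) * (1 - p) ^ (n - card S)
        - real (n - card S) * p ^ card S * (1 - p) ^ (n - card S - 1)))"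

lemma Q_deriv: "(Q n c has_real_derivative Q' n c p) (at p)"
  unfolding Q_def Q'_def
  by (auto intro!: derivative_eq_intros sum.cong simp: algebra_simps)

lemma pow_pred: "p \<noteq> 0 \<Longrightarrow> real k * (p::real) ^ (k - 1) = real k / p * p ^ k"
  by (cases k) auto

lemma term_bound:
  assumes p: "0 < p" "p < 1" and k: "k \<le> n"
  shows "\<bar>real k * p ^ (k - 1) * (1 - p) ^ (n - k) - real (n - k) * p ^ k * (1 - p) ^ (n - k - 1)\<bar>
         \<le> real n * (1/p + 1/(1-p)) * (p ^ k * (1 - p) ^ (n - k))"
proof -
  define t where "t = p ^ k * (1 - p) ^ (n - k)"
  have t0: "0 \<le> t" using p by (simp add: t_def)
  have a: "real k * p ^ (k - 1) * (1 - p) ^ (n - k) = real k / p * t"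
    using pow_pred[of p k] p by (simp add: t_def)
  have b: "real (n - k) * p ^ k * (1 - p) ^ (n - k - 1) = real (n - k) / (1 - p) * t"
  proof -
    have "real (n - k) * p ^ k * (1 - p) ^ (n - k - 1) = p ^ k * (real (n - k) * (1 - p) ^ (n - k - 1))"
      by (simp add: mult_ac)
    also have "\<dots> = p ^ k * (real (n - k) / (1 - p) * (1 - p) ^ (n - k))"
      using pow_pred[of "1-p" "n-k"] p by simp
    finally show ?thesis by (simp add: t_def mult_ac)
  qed
  have a1: "real k / p * t \<le> real n / p * t"
    using p k t0 by (intro mult_right_mono divide_right_mono) auto
  have b1: "real (n-k) / (1-p) * t \<le> real n / (1-p) * t"
    using p k t0 by (intro mult_right_mono divide_right_mono) auto
  have "\<bar>real k / p * t - real (n - k) / (1 - p) * t\<bar> \<le> real k / p * t + real (n - k) / (1 - p) * t"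
    using p t0 by (intro abs_diff_le_iff[THEN iffD2]) (auto simp: )
  also have "\<dots> \<le> real n / p * t + real n / (1-p) * t" using a1 b1 by simp
  finally have "\<bar>real k / p * t - real (n - k) / (1 - p) * t\<bar> \<le> real n * (1/p + 1/(1-p)) * t"
    by (simp add: algebra_simps)
  then show ?thesis unfolding a b by (simp add: t_def)
qed

lemma Q'_bound:
  assumes p: "0 < p" "p < 1" and c: "\<And>S. 0 \<le> c S"
  shows "\<bar>Q' n c p\<bar> \<le> real n * (1/p + 1/(1-p)) * Q n c p"
proof -
  have "\<bar>Q' n c p\<bar> \<le> (\<Sum>S\<in>Pow {..<n}. \<bar>c S * (real (card S) * p ^ (card S - 1) * (1 - p) ^ (n - card S)
        - real (n - card S) * p ^ card S * (1 - p) ^ (n - card S - 1))\<bar>)"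
    unfolding Q'_def by (rule sum_abs)
  also have "\<dots> \<le> (\<Sum>S\<in>Pow {..<n}. c S * (real n * (1/p + 1/(1-p)) * (p ^ card S * (1 - p) ^ (n - card S))))"
  proof (rule sum_mono)
    fix S assume S: "S \<in> Pow {..<n}"
    then have "card S \<le> n" using card_mono[of "{..<n}" S] by auto
    then show "\<bar>c S * (real (card S) * p ^ (card S - 1) * (1 - p) ^ (n - card S)
        - real (n - card S) * p ^ card S * (1 - p) ^ (n - card S - 1))\<bar> \<le> c S * (real n * (1/p + 1/(1-p)) * (p ^ card S * (1 - p) ^ (n - card S)))"
      using term_bound[OF p, of "card S" n] c[of S] by (simp add: abs_mult mult_left_mono)
  qed
  also have "\<dots> = real n * (1/p + 1/(1-p)) * Q n c p"
    unfolding Q_def by (simp add: sum_distrib_left algebra_simps)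
  finally show ?thesis .
qed

lemma Q_compare:
  assumes p: "0 < p" "p < 1" and q: "0 < q" "q < 1" and c: "\<And>S. 0 \<le> c S"
    and s: "q \<le> s * p" "1 - q \<le> s * (1 - p)"
  shows "Q n c q \<le> s ^ n * Q n c p"
proof -
  have s0: "0 \<le> s" using s p q by (smt (verit) mult_nonneg_nonneg mult_le_0_iff)
  have "Q n c q \<le> (\<Sum>S\<in>Pow {..<n}. c S * (s ^ n * (p ^ card S * (1 - p) ^ (n - card S))))"
    unfolding Q_def
  proof (rule sum_mono)
    fix S assume S: "S \<in> Pow {..<n}"
    then have k: "card S \<le> n" using card_mono[of "{..<n}" S] by auto
    have 1: "q ^ card S \<le> (s*p) ^ card S" using q s by (intro power_mono) auto
    have 2: "(1-q) ^ (n - card S) \<le> (s*(1-p)) ^ (n - card S)" using q s by (intro power_mono) auto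
    have "q ^ card S * (1 - q) ^ (n - card S) \<le> (s*p) ^ card S * (s*(1-p)) ^ (n - card S)"
      using 1 2 q s0 p by (intro mult_mono) auto
    also have "\<dots> = s ^ (card S + (n - card S)) * (p ^ card S * (1 - p) ^ (n - card S))"
      by (simp add: power_mult_distrib power_add)
    also have "\<dots> = s ^ n * (p ^ card S * (1 - p) ^ (n - card S))" using k by simp
    finally show "c S * (q ^ card S * (1 - q) ^ (n - card S)) \<le> c S * (s ^ n * (p ^ card S * (1 - p) ^ (n - card S)))"
      using c[of S] by (intro mult_left_mono) auto
  qed
  also have "\<dots> = s ^ n * Q n c p" unfolding Q_def by (simp add: sum_distrib_left algebra_simps)
  finally show ?thesis .
qed



definition N0 :: "(bool \<times> real) measure" where
  "N0 = count_space UNIV \<Otimes>\<^sub>M uniform_measure lborel {0<..<1::real}"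

definition wt :: "real \<Rightarrow> bool \<times> real \<Rightarrow> real" where
  "wt p xu = (if fst xu then p else 1 - p)"

lemma meas_fst_N0: "(\<lambda>xu. h (fst xu)) \<in> borel_measurable N0"
  unfolding N0_def by (rule measurable_compose[OF measurable_fst]) simp

lemma input_density:
  assumes "0 \<le> p" "p \<le> 1"
  shows "input_measure p = density N0 (\<lambda>xu. ennreal (wt p xu))"
proof -
  interpret U: prob_space "uniform_measure lborel {0<..<1::real}"
    by (intro prob_space_uniform_measure) auto
  have "input_measure p = density (count_space UNIV) (pmf (bernoulli_pmf p))
            \<Otimes>\<^sub>M density (uniform_measure lborel {0<..<1::real}) (\<lambda>_. 1)"
    unfolding input_measure_def by (simp add: measure_pmf_eq_density density_1)
  also have "\<dots> = density N0 (\<lambda>(x,y). ennreal (pmf (bernoulli_pmf p) x) * 1)"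
    unfolding N0_def
    by (rule pair_measure_density) (auto simp: density_1 intro: U.sigma_finite_measure)
  also have "\<dots> = density N0 (\<lambda>xu. ennreal (wt p xu))"
  proof (rule density_cong)
    show "(\<lambda>(x,y). ennreal (pmf (bernoulli_pmf p) x) * 1) \<in> borel_measurable N0"
      using meas_fst_N0[of "\<lambda>x. ennreal (pmf (bernoulli_pmf p) x)"] by (simp add: case_prod_unfold)
    show "(\<lambda>xu. ennreal (wt p xu)) \<in> borel_measurable N0"
      using meas_fst_N0[of "\<lambda>x. ennreal (if x then p else 1 - p)"] by (simp add: wt_def)
    show "AE x in N0. (case x of (x, y) \<Rightarrow> ennreal (pmf (bernoulli_pmf p) x) * 1) = ennreal (wt p x)"
      using assms by (auto simp: wt_def)
  qed
  finally show ?thesis .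
qed

lemma finite_N0: "finite_measure N0"
proof -
  interpret U: prob_space "uniform_measure lborel {0<..<1::real}"
    by (intro prob_space_uniform_measure) auto
  show ?thesis unfolding N0_def
    by (intro finite_measure_pair_measure finite_measure_count_space) (auto intro: U.finite_measure)
qed

lemma sets_N0: "sets N0 = sets (count_space UNIV \<Otimes>\<^sub>M (borel::real measure))"
  unfolding N0_def by (intro sets_pair_measure_cong) auto

lemma space_N0: "space N0 = UNIV"
  unfolding N0_def by (simp add: space_pair_measure)

lemma indicator_PiE_prod:
  assumes "\<omega> \<in> extensional I" "finite I"
  shows "(indicator (Pi\<^sub>E I A) \<omega> :: ennreal) = (\<Prod>i\<in>I. indicator (A i) (\<omega> i))"
proof (cases "\<omega> \<in> Pi\<^sub>E I A")
  case True then show ?thesis by (auto simp: indicator_def PiE_iff)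
next
  case False
  then obtain i where "i \<in> I" "\<omega> i \<notin> A i" using assms(1) by (auto simp: PiE_iff)
  then show ?thesis using False assms(2) by (auto simp: indicator_def intro!: prod_zero)
qed

lemma PiM_density:
  assumes fin: "finite I" and sf: "sigma_finite_measure N" "sigma_finite_measure (density N g)"
    and g: "g \<in> borel_measurable N"
  shows "PiM I (\<lambda>_. density N g) = density (PiM I (\<lambda>_. N)) (\<lambda>\<omega>. \<Prod>i\<in>I. g (\<omega> i))"
proof -
  interpret D: product_sigma_finite "\<lambda>_. density N g" using sf unfolding product_sigma_finite_def by auto
  interpret NN: product_sigma_finite "\<lambda>_. N" using sf unfolding product_sigma_finite_def by auto
  show ?thesis
  proof (rule D.PiM_eqI[symmetric, OF fin])
    show "sets (density (PiM I (\<lambda>_. N)) (\<lambda>\<omega>. \<Prod>i\<in>I. g (\<omega> i))) = sets (PiM I (\<lambda>_. density N g))"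
      by (simp cong: sets_PiM_cong)
  next
    fix A assume A: "\<And>i. i \<in> I \<Longrightarrow> A i \<in> sets (density N g)"
    then have A': "\<And>i. i \<in> I \<Longrightarrow> A i \<in> sets N" by simp
    have "emeasure (density (PiM I (\<lambda>_. N)) (\<lambda>\<omega>. \<Prod>i\<in>I. g (\<omega> i))) (Pi\<^sub>E I A)
        = (\<integral>\<^sup>+\<omega>. (\<Prod>i\<in>I. g (\<omega> i)) * indicator (Pi\<^sub>E I A) \<omega> \<partial>PiM I (\<lambda>_. N))"
      using A' fin g by (intro emeasure_density) (auto intro!: sets_PiM_I_finite borel_measurable_prod_ennreal
           measurable_compose[OF measurable_component_singleton[where M="\<lambda>_. N"] g])
    also have "\<dots> = (\<integral>\<^sup>+\<omega>. (\<Prod>i\<in>I. g (\<omega> i) * indicator (A i) (\<omega> i)) \<partial>PiM I (\<lambda>_. N))"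
    proof (intro nn_integral_cong)
      fix \<omega> assume "\<omega> \<in> space (PiM I (\<lambda>_. N))"
      then have "\<omega> \<in> extensional I" by (simp add: space_PiM PiE_def)
      then show "(\<Prod>i\<in>I. g (\<omega> i)) * indicator (Pi\<^sub>E I A) \<omega> = (\<Prod>i\<in>I. g (\<omega> i) * indicator (A i) (\<omega> i))"
        using fin by (simp add: indicator_PiE_prod prod.distrib)
    qed
    also have "\<dots> = (\<Prod>i\<in>I. \<integral>\<^sup>+x. g x * indicator (A i) x \<partial>N)"
      using fin A' g by (intro NN.product_nn_integral_prod) auto
    also have "\<dots> = (\<Prod>i\<in>I. emeasure (density N g) (A i))"
      using A' g by (intro prod.cong refl, subst emeasure_density) auto
    finally show "emeasure (density (PiM I (\<lambda>_. N)) (\<lambda>\<omega>. \<Prod>i\<in>I. g (\<omega> i))) (Pi\<^sub>E I A) = (\<Prod>i\<in>I. emeasure (density N g) (A i))" .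
  qed
qed



lemma sigma_finite_prob: "prob_space M \<Longrightarrow> sigma_finite_measure M"
  by (metis prob_space.axioms(1) finite_measure.sigma_finite_measure)

lemma PiM_input:
  assumes "0 \<le> p" "p \<le> 1"
  shows "PiM {..<n::nat} (\<lambda>_. input_measure p) =
         density (PiM {..<n} (\<lambda>_. N0)) (\<lambda>\<omega>. ennreal (\<Prod>i\<in>{..<n}. wt p (\<omega> i)))"
proof -
  have "PiM {..<n} (\<lambda>_. input_measure p) = PiM {..<n} (\<lambda>_. density N0 (\<lambda>xu. ennreal (wt p xu)))"
    using input_density[OF assms] by simp
  also have "\<dots> = density (PiM {..<n} (\<lambda>_. N0)) (\<lambda>\<omega>. \<Prod>i\<in>{..<n}. ennreal (wt p (\<omega> i)))"
  proof (rule PiM_density)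
    show "sigma_finite_measure N0" using finite_N0 by (rule finite_measure.sigma_finite_measure)
    show "sigma_finite_measure (density N0 (\<lambda>xu. ennreal (wt p xu)))"
      using input_density[OF assms] prob_input sigma_finite_prob by metis
    show "(\<lambda>xu. ennreal (wt p xu)) \<in> borel_measurable N0"
      using meas_fst_N0[of "\<lambda>x. ennreal (if x then p else 1 - p)"] by (simp add: wt_def)
  qed simp
  also have "\<dots> = density (PiM {..<n} (\<lambda>_. N0)) (\<lambda>\<omega>. ennreal (\<Prod>i\<in>{..<n}. wt p (\<omega> i)))"
    using assms by (intro arg_cong[where f="density _"] ext prod_ennreal) (auto simp: wt_def)
  finally show ?thesis .
qed

lemma prod_wt:
  "(\<Prod>i\<in>{..<n}. wt p (\<omega> i)) = p ^ card {i\<in>{..<n}. fst (\<omega> i)} * (1 - p) ^ (n - card {i\<in>{..<n}. fst (\<omega> i)})"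
proof -
  have cd: "card ({..<n} - {i\<in>{..<n}. fst (\<omega> i)}) = n - card {i\<in>{..<n}. fst (\<omega> i)}"
    by (subst card_Diff_subset) auto
  have "(\<Prod>i\<in>{..<n}. wt p (\<omega> i)) = (\<Prod>i\<in>{..<n} \<inter> {i. fst (\<omega> i)}. p) * (\<Prod>i\<in>{..<n} \<inter> - {i. fst (\<omega> i)}. 1 - p)"
    unfolding wt_def by (rule prod.If_cases) simp
  also have "{..<n} \<inter> - {i. fst (\<omega> i)} = {..<n} - {i\<in>{..<n}. fst (\<omega> i)}" by auto
  also have "{..<n} \<inter> {i. fst (\<omega> i)} = {i\<in>{..<n}. fst (\<omega> i)}" by auto
  finally show ?thesis by (simp only: cd prod_constant)
qed

lemma finite_nu: "finite_measure (PiM {..<n::nat} (\<lambda>_. N0))"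
proof -
  interpret N: finite_measure N0 by (rule finite_N0)
  interpret P: product_sigma_finite "\<lambda>_. N0" unfolding product_sigma_finite_def
    by (auto intro: N.sigma_finite_measure)
  have "emeasure (PiM {..<n} (\<lambda>_. N0)) (space (PiM {..<n} (\<lambda>_. N0))) = (\<Prod>i\<in>{..<n}. emeasure N0 (space N0))"
    unfolding space_PiM by (rule P.emeasure_PiM) auto
  also have "\<dots> \<noteq> \<infinity>" by (simp add: N.emeasure_finite power_eq_top_ennreal)
  finally show ?thesis by (rule finite_measureI)
qed

lemma sets_nu: "sets (PiM {..<n::nat} (\<lambda>_. N0)) = sets (hist_space n)"
  unfolding hist_space_def by (intro sets_PiM_cong) (auto simp: sets_N0)

lemma poly_form:
  assumes B: "B \<in> sets (hist_space n)"
  shows "\<exists>c. (\<forall>S. 0 \<le> c S) \<and> (\<forall>p\<in>{0..1}.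
           measure (seq_space p) {\<omega>\<in>space (seq_space p). restrict \<omega> {..<n} \<in> B} = Q n c p)"
proof -
  define \<nu> where "\<nu> = PiM {..<n} (\<lambda>_. N0)"
  interpret nu: finite_measure \<nu> unfolding \<nu>_def by (rule finite_nu)
  define C where "C S = {\<omega>\<in>space \<nu>. \<forall>i\<in>{..<n}. fst (\<omega> i) = (i \<in> S)}" for S
  define c where "c S = measure \<nu> (B \<inter> C S)" for S
  have B\<nu>: "B \<in> sets \<nu>" using B sets_nu unfolding \<nu>_def by simp
  have Cm: "C S \<in> sets \<nu>" for S
  proof -
    have "\<And>i. i < n \<Longrightarrow> (\<lambda>\<omega>. fst (\<omega> i)) \<in> \<nu> \<rightarrow>\<^sub>M count_space UNIV"
      by (rule measurable_compose[of "\<lambda>\<omega>. \<omega> i" \<nu> N0 fst for i]) (auto simp: \<nu>_def N0_def)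
    then show ?thesis unfolding C_def by measurable
  qed
  show ?thesis
  proof (intro exI conjI allI ballI)
    show "0 \<le> c S" for S by (simp add: c_def)
    fix p :: real assume p: "p \<in> {0..1}"
    define H where "H \<omega> = ennreal (\<Prod>i\<in>{..<n}. wt p (\<omega> i))" for \<omega>
    have Hm: "H \<in> borel_measurable \<nu>"
    proof -
      have "(\<lambda>\<omega>. wt p (\<omega> i)) \<in> borel_measurable \<nu>" if "i < n" for i
        using that meas_fst_N0[of "\<lambda>x. if x then p else 1 - p"]
        by (intro measurable_compose[of "\<lambda>\<omega>. \<omega> i" \<nu> N0 "wt p"]) (auto simp: \<nu>_def wt_def[abs_def])
      then show ?thesis unfolding H_def by (intro measurable_compose[OF borel_measurable_prod] ) auto
    qed
    have "measure (seq_space p) {\<omega>\<in>space (seq_space p). restrict \<omega> {..<n} \<in> B}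
        = measure (PiM {..<n} (\<lambda>_. input_measure p)) B"
      by (rule measure_restrict[OF B])
    also have "PiM {..<n} (\<lambda>_. input_measure p) = density \<nu> H"
      unfolding \<nu>_def H_def using p by (intro PiM_input) auto
    also have "measure (density \<nu> H) B = enn2real (\<integral>\<^sup>+\<omega>. H \<omega> * indicator B \<omega> \<partial>\<nu>)"
      unfolding measure_def using Hm B\<nu> by (simp add: emeasure_density)
    also have "(\<integral>\<^sup>+\<omega>. H \<omega> * indicator B \<omega> \<partial>\<nu>) =
        (\<integral>\<^sup>+\<omega>. (\<Sum>S\<in>Pow {..<n}. ennreal (p ^ card S * (1 - p) ^ (n - card S)) * indicator (B \<inter> C S) \<omega>) \<partial>\<nu>)"
    proof (rule nn_integral_cong)
      fix \<omega> assume \<omega>: "\<omega> \<in> space \<nu>"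
      define S0 where "S0 = {i\<in>{..<n}. fst (\<omega> i)}"
      have S0: "S0 \<in> Pow {..<n}" by (auto simp: S0_def)
      have ind: "indicator (B \<inter> C S) \<omega> = (if S = S0 then indicator B \<omega> else (0::ennreal))"
        if "S \<in> Pow {..<n}" for S
        using that \<omega> by (auto simp: C_def S0_def indicator_def)
      have "(\<Sum>S\<in>Pow {..<n}. ennreal (p ^ card S * (1 - p) ^ (n - card S)) * indicator (B \<inter> C S) \<omega>)
          = (\<Sum>S\<in>Pow {..<n}. if S = S0 then ennreal (p ^ card S * (1 - p) ^ (n - card S)) * indicator B \<omega> else 0)"
        by (intro sum.cong refl) (simp add: ind)
      also have "\<dots> = ennreal (p ^ card S0 * (1 - p) ^ (n - card S0)) * indicator B \<omega>"
        using S0 by (subst sum.delta) auto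
      also have "\<dots> = H \<omega> * indicator B \<omega>"
        unfolding H_def prod_wt S0_def ..
      finally show "H \<omega> * indicator B \<omega> = (\<Sum>S\<in>Pow {..<n}. ennreal (p ^ card S * (1 - p) ^ (n - card S)) * indicator (B \<inter> C S) \<omega>)" ..
    qed
    also have "\<dots> = (\<Sum>S\<in>Pow {..<n}. \<integral>\<^sup>+\<omega>. ennreal (p ^ card S * (1 - p) ^ (n - card S)) * indicator (B \<inter> C S) \<omega> \<partial>\<nu>)"
      using B\<nu> Cm by (intro nn_integral_sum) auto
    also have "\<dots> = (\<Sum>S\<in>Pow {..<n}. ennreal (p ^ card S * (1 - p) ^ (n - card S)) * emeasure \<nu> (B \<inter> C S))"
      using B\<nu> Cm by (intro sum.cong refl nn_integral_cmult_indicator) auto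
    also have "\<dots> = (\<Sum>S\<in>Pow {..<n}. ennreal (c S * (p ^ card S * (1 - p) ^ (n - card S))))"
      using B\<nu> Cm p by (intro sum.cong refl) (auto simp: c_def nu.emeasure_eq_measure ennreal_mult' mult.commute)
    also have "\<dots> = ennreal (Q n c p)"
      unfolding Q_def using p by (intro sum_ennreal) (auto simp: c_def)
    finally have eq: "measure (seq_space p) {\<omega>\<in>space (seq_space p). restrict \<omega> {..<n} \<in> B} = enn2real (ennreal (Q n c p))" .
    have Qnn: "0 \<le> Q n c p" unfolding Q_def c_def using p by (intro sum_nonneg) auto
    show "measure (seq_space p) {\<omega>\<in>space (seq_space p). restrict \<omega> {..<n} \<in> B} = Q n c p"
      using eq[unfolded enn2real_ennreal[OF Qnn]] .
  qed
qed



lemma stops_meas: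
  assumes "bernoulli_factory S f \<tau> \<gamma>"
  shows "(\<lambda>\<omega>. stops_at \<tau> k \<omega>) \<in> seq_space p \<rightarrow>\<^sub>M count_space UNIV"
  unfolding stops_at_def
  using assms unfolding bernoulli_factory_def
  by (intro measurable_compose[OF restrict_meas]) auto

lemma tau_restrict_meas:
  assumes "bernoulli_factory S f \<tau> \<gamma>" "k \<le> n"
  shows "(\<lambda>x. \<tau> k (restrict x {..<k})) \<in> hist_space n \<rightarrow>\<^sub>M count_space UNIV"
proof (rule measurable_compose[of _ _ "hist_space k"])
  show "(\<lambda>x. restrict x {..<k}) \<in> hist_space n \<rightarrow>\<^sub>M hist_space k"
    unfolding hist_space_def using assms(2) by (intro measurable_restrict_subset) auto
  show "\<tau> k \<in> hist_space k \<rightarrow>\<^sub>M count_space UNIV"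
    using assms(1) unfolding bernoulli_factory_def by auto
qed

lemma phi_poly:
  assumes bf: "bernoulli_factory S f \<tau> \<gamma>" and n: "1 \<le> n"
  shows "\<exists>c. (\<forall>S. 0 \<le> c S) \<and> (\<forall>p\<in>{0..1}. phi1 \<tau> \<gamma> n p = Q n c p)"
proof -
  define B where "B = {x\<in>space (hist_space n). \<tau> n x \<and> (\<forall>k\<in>{1..<n}. \<not> \<tau> k (restrict x {..<k})) \<and> \<gamma> n x}"
  have m1[measurable]: "\<tau> n \<in> hist_space n \<rightarrow>\<^sub>M count_space UNIV" "\<gamma> n \<in> hist_space n \<rightarrow>\<^sub>M count_space UNIV"
    using bf unfolding bernoulli_factory_def by auto
  have m2[measurable]: "\<And>k. k \<in> {1..<n} \<Longrightarrow> (\<lambda>x. \<tau> k (restrict x {..<k})) \<in> hist_space n \<rightarrow>\<^sub>M count_space UNIV"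
    using tau_restrict_meas[OF bf] by auto
  have Bm: "B \<in> sets (hist_space n)"
    unfolding B_def by measurable
  obtain c where c: "\<forall>S. 0 \<le> c S" "\<forall>p\<in>{0..1}. measure (seq_space p) {\<omega>\<in>space (seq_space p). restrict \<omega> {..<n} \<in> B} = Q n c p"
    using poly_form[OF Bm] by blast
  have "phi1 \<tau> \<gamma> n p = measure (seq_space p) {\<omega>\<in>space (seq_space p). restrict \<omega> {..<n} \<in> B}" for p
  proof -
    have "{\<omega> \<in> space (seq_space p). first_stop \<tau> n \<omega> \<and> \<gamma> n (restrict \<omega> {..<n})}
        = {\<omega>\<in>space (seq_space p). restrict \<omega> {..<n} \<in> B}"
    proof (intro Collect_cong conj_cong refl)
      fix \<omega> :: "nat \<Rightarrow> bool \<times> real"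
      have rr: "restrict (restrict \<omega> {..<n}) {..<k} = restrict \<omega> {..<k}" if "k \<in> {1..<n}" for k
        using that by (auto simp: restrict_def)
      show "(first_stop \<tau> n \<omega> \<and> \<gamma> n (restrict \<omega> {..<n})) = (restrict \<omega> {..<n} \<in> B)"
        using n rr by (auto simp: first_stop_def stops_at_def B_def space_hist)
    qed
    then show ?thesis unfolding phi1_def by simp
  qed
  with c show ?thesis by auto
qed

lemma phi_le:
  assumes bf: "bernoulli_factory S f \<tau> \<gamma>" and n: "1 \<le> n"
  shows "phi1 \<tau> \<gamma> n p \<le> measure (seq_space p) {\<omega>\<in>space (seq_space p). \<forall>k\<in>{1..n-1}. \<not> stops_at \<tau> k \<omega>}"
proof -
  interpret prob_space "seq_space p" by (rule prob_seq)
  have [measurable]: "\<And>k. (\<lambda>\<omega>. stops_at \<tau> k \<omega>) \<in> seq_space p \<rightarrow>\<^sub>M count_space UNIV"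
    using stops_meas[OF bf] by auto
  show ?thesis unfolding phi1_def
    by (rule finite_measure_mono) (auto simp: first_stop_def)
qed



lemma deriv_phi:
  assumes bf: "bernoulli_factory S f \<tau> \<gamma>" and n: "1 \<le> n"
  obtains c where "\<forall>S. 0 \<le> c S" "\<forall>p\<in>{0..1}. phi1 \<tau> \<gamma> n p = Q n c p"
    "\<And>q. 0 < q \<Longrightarrow> q < 1 \<Longrightarrow> (phi1 \<tau> \<gamma> n has_real_derivative Q' n c q) (at q)"
proof -
  obtain c where c: "\<forall>S. 0 \<le> c S" "\<forall>p\<in>{0..1}. phi1 \<tau> \<gamma> n p = Q n c p"
    using phi_poly[OF bf n] by blast
  have "(phi1 \<tau> \<gamma> n has_real_derivative Q' n c q) (at q)" if "0 < q" "q < 1" for q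
    by (rule has_field_derivative_transform_within_open[OF Q_deriv, of "{0<..<1}"])
       (use that c in auto)
  with c that show ?thesis by blast
qed

lemma local_bound:
  assumes bf: "bernoulli_factory S f \<tau> \<gamma>" and fast: "fast_factory S \<tau>"
    and SS: "S \<subseteq> {0<..<1}" and pS: "p \<in> S"
  shows "\<exists>\<delta>>0. \<exists>K\<ge>0. \<exists>\<rho>. 0 \<le> \<rho> \<and> \<rho> < 1 \<and> (\<forall>q. 0 < q \<and> q < 1 \<and> \<bar>q - p\<bar> < \<delta> \<longrightarrow>
           (\<forall>n\<ge>1. \<bar>deriv (phi1 \<tau> \<gamma> n) q\<bar> \<le> K * (real n * \<rho> ^ (n - 1)) * (1/q + 1/(1-q))))"
proof -
  have p: "0 < p" "p < 1" using SS pS by auto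
  obtain A \<beta> where A: "A > 0" and \<beta>: "\<beta> < 1"
    and fb: "\<And>n::nat. measure (seq_space p) {\<omega> \<in> space (seq_space p). \<forall>k\<in>{1..n}. \<not> stops_at \<tau> k \<omega>} \<le> A * \<beta> ^ n"
    using fast pS unfolding fast_factory_def by blast
  interpret prob_space "seq_space p" by (rule prob_seq)
  have m0: "0 \<le> measure (seq_space p) {\<omega> \<in> space (seq_space p). \<forall>k\<in>{1..1}. \<not> stops_at \<tau> k \<omega>}"
    by (rule measure_nonneg)
  have "0 \<le> A * \<beta>" using order_trans[OF m0 fb[of 1]] by simp
  then have \<beta>0: "0 \<le> \<beta>" using A by (simp add: zero_le_mult_iff)
  define s where "s = 2 / (1 + \<beta>)"
  have s1: "1 < s" using \<beta> \<beta>0 by (simp add: s_def field_simps)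
  define \<rho> where "\<rho> = s * \<beta>"
  have \<rho>: "0 \<le> \<rho>" "\<rho> < 1" using \<beta> \<beta>0 s1 by (auto simp: \<rho>_def s_def field_simps)
  define \<delta> where "\<delta> = (s - 1) * min p (1 - p)"
  have \<delta>: "\<delta> > 0" using s1 p by (simp add: \<delta>_def)
  have As: "0 \<le> A * s" using A s1 by simp
  have main: "\<forall>q. 0 < q \<and> q < 1 \<and> \<bar>q - p\<bar> < \<delta> \<longrightarrow>
           (\<forall>n\<ge>1. \<bar>deriv (phi1 \<tau> \<gamma> n) q\<bar> \<le> A * s * (real n * \<rho> ^ (n - 1)) * (1/q + 1/(1-q)))"
  proof (intro allI impI)
    fix q n assume q: "0 < q \<and> q < 1 \<and> \<bar>q - p\<bar> < \<delta>" and n: "1 \<le> (n::nat)"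
    obtain c where c0: "\<forall>S. 0 \<le> c S" and ceq: "\<forall>p\<in>{0..1}. phi1 \<tau> \<gamma> n p = Q n c p"
      and cd: "\<And>q. 0 < q \<Longrightarrow> q < 1 \<Longrightarrow> (phi1 \<tau> \<gamma> n has_real_derivative Q' n c q) (at q)"
      using deriv_phi[OF bf n] by blast
    have dq: "deriv (phi1 \<tau> \<gamma> n) q = Q' n c q" using cd q by (intro DERIV_imp_deriv) auto
    have qs: "q \<le> s * p" "1 - q \<le> s * (1 - p)"
    proof -
      have "\<delta> \<le> (s - 1) * p" "\<delta> \<le> (s - 1) * (1 - p)" using s1 by (auto simp: \<delta>_def)
      then show "q \<le> s * p" "1 - q \<le> s * (1 - p)" using q by (auto simp: algebra_simps)
    qed
    define Z where "Z = 1/q + 1/(1-q)"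
    have Z0: "0 \<le> Z" using q by (simp add: Z_def)
    have "\<bar>deriv (phi1 \<tau> \<gamma> n) q\<bar> \<le> real n * Z * Q n c q"
      unfolding dq Z_def using q c0 by (intro Q'_bound) auto
    also have "\<dots> \<le> real n * Z * (s ^ n * Q n c p)"
      using Q_compare[of p q c s n] p q c0 qs Z0 by (intro mult_left_mono) auto
    also have "Q n c p = phi1 \<tau> \<gamma> n p" using ceq p by auto
    also have "phi1 \<tau> \<gamma> n p \<le> A * \<beta> ^ (n - 1)"
    proof -
      have "phi1 \<tau> \<gamma> n p \<le> measure (seq_space p) {\<omega>\<in>space (seq_space p). \<forall>k\<in>{1..n-1}. \<not> stops_at \<tau> k \<omega>}"
        by (rule phi_le[OF bf n])
      also have "\<dots> \<le> A * \<beta> ^ (n - 1)" by (rule fb)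
      finally show ?thesis .
    qed
    then have "real n * Z * (s ^ n * phi1 \<tau> \<gamma> n p) \<le> real n * Z * (s ^ n * (A * \<beta> ^ (n - 1)))"
      using Z0 s1 by (intro mult_left_mono) auto
    also have "s ^ n = s * s ^ (n - 1)" using n by (cases n) auto
    also have "real n * Z * (s * s ^ (n - 1) * (A * \<beta> ^ (n - 1))) = A * s * (real n * \<rho> ^ (n - 1)) * Z"
      by (simp add: \<rho>_def power_mult_distrib)
    finally show "\<bar>deriv (phi1 \<tau> \<gamma> n) q\<bar> \<le> A * s * (real n * \<rho> ^ (n - 1)) * (1 / q + 1 / (1 - q))"
      by (simp add: Z_def)
  qed
  show ?thesis using \<delta> \<rho> As main by blast
qed



lemma summ_n: "0 \<le> (r::real) \<Longrightarrow> r < 1 \<Longrightarrow> summable (\<lambda>i. real (Suc i) * r ^ i)"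
proof -
  assume "0 \<le> r" "r < 1"
  have "summable (\<lambda>n. diffs (\<lambda>_. 1::real) n * r ^ n)"
    by (rule termdiff_converges[where K=1]) (use \<open>0 \<le> r\<close> \<open>r < 1\<close> in \<open>auto intro: summable_geometric\<close>)
  then show ?thesis by (simp add: diffs_def)
qed

theorem lemma1:
  fixes S :: "real set" and f :: "real \<Rightarrow> real"
    and \<tau> \<gamma> :: "nat \<Rightarrow> (nat \<Rightarrow> bool \<times> real) \<Rightarrow> bool"
  assumes "open S" and "S \<subseteq> {0<..<1}"
    and "\<forall>p\<in>S. f p \<in> {0<..<1}"
    and "\<forall>p\<in>S. f differentiable (at p)"
    and "bernoulli_factory S f \<tau> \<gamma>"
    and "fast_factory S \<tau>"
  shows "(\<forall>n\<ge>1. \<forall>p\<in>S. phi1 \<tau> \<gamma> n differentiable (at p)) \<and>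
         (\<forall>\<zeta> \<eta>. {\<zeta>..\<eta>} \<subseteq> S \<longrightarrow>
            uniformly_convergent_on {\<zeta>..\<eta>} (\<lambda>m p. \<Sum>n\<in>{1..m}. deriv (phi1 \<tau> \<gamma> n) p))"
proof (intro conjI allI impI ballI)
  note bf = assms(5) and fast = assms(6) and SS = assms(2)
  fix n :: nat and p assume n: "1 \<le> n" and p: "p \<in> S"
  obtain c where "\<forall>S. 0 \<le> c S" "\<forall>p\<in>{0..1}. phi1 \<tau> \<gamma> n p = Q n c p"
    and cd: "\<And>q. 0 < q \<Longrightarrow> q < 1 \<Longrightarrow> (phi1 \<tau> \<gamma> n has_real_derivative Q' n c q) (at q)"
    using deriv_phi[OF bf n] by blast
  have "(phi1 \<tau> \<gamma> n has_real_derivative Q' n c p) (at p)" using cd p SS by auto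
  then show "phi1 \<tau> \<gamma> n differentiable (at p)"
    unfolding real_differentiable_def by blast
next
  note bf = assms(5) and fast = assms(6) and SS = assms(2)
  fix \<zeta> \<eta> :: real assume sub: "{\<zeta>..\<eta>} \<subseteq> S"
  have eqf: "(\<lambda>m p. \<Sum>n\<in>{1..m}. deriv (phi1 \<tau> \<gamma> n) p) = (\<lambda>m p. \<Sum>i<m. deriv (phi1 \<tau> \<gamma> (Suc i)) p)"
    by (intro ext) (rule sum_bounds_lt_plus1[symmetric])
  show "uniformly_convergent_on {\<zeta>..\<eta>} (\<lambda>m p. \<Sum>n\<in>{1..m}. deriv (phi1 \<tau> \<gamma> n) p)"
  proof (cases "\<zeta> \<le> \<eta>")
    case False
    then show ?thesis unfolding eqf
      by (intro Weierstrass_m_test'[where M="\<lambda>_. 0"]) auto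
  next
    case True
    have zS: "\<zeta> \<in> S" "\<eta> \<in> S" using subsetD[OF sub, of \<zeta>] subsetD[OF sub, of \<eta>] True by simp_all
    have z: "0 < \<zeta>" "\<eta> < 1" using subsetD[OF SS zS(1)] subsetD[OF SS zS(2)] by simp_all
    define Bd where "Bd p \<delta> K \<rho> \<longleftrightarrow> \<delta> > 0 \<and> K \<ge> 0 \<and> 0 \<le> \<rho> \<and> \<rho> < 1 \<and>
         (\<forall>q. 0 < q \<and> q < 1 \<and> \<bar>q - p\<bar> < \<delta> \<longrightarrow>
           (\<forall>n\<ge>1. \<bar>deriv (phi1 \<tau> \<gamma> n) q\<bar> \<le> K * (real n * \<rho> ^ (n - 1)) * (1/q + 1/(1-q))))"
      for p \<delta> K \<rho> :: real
    have "\<forall>p\<in>S. \<exists>t. Bd p (fst t) (fst (snd t)) (snd (snd t))"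
    proof
      fix p assume "p \<in> S"
      from local_bound[OF bf fast SS this] obtain \<delta> K \<rho> where "Bd p \<delta> K \<rho>"
        unfolding Bd_def by (elim exE conjE) blast
      then show "\<exists>t. Bd p (fst t) (fst (snd t)) (snd (snd t))"
        by (intro exI[of _ "(\<delta>, K, \<rho>)"]) simp
    qed
    from bchoice[OF this] obtain t where t: "\<forall>p\<in>S. Bd p (fst (t p)) (fst (snd (t p))) (snd (snd (t p)))"
      by (elim exE)
    define \<delta> where "\<delta> p = fst (t p)" for p
    define K where "K p = fst (snd (t p))" for p
    define \<rho> where "\<rho> p = snd (snd (t p))" for p
    have H: "\<And>p. p \<in> S \<Longrightarrow> \<delta> p > 0 \<and> K p \<ge> 0 \<and> 0 \<le> \<rho> p \<and> \<rho> p < 1 \<and>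
         (\<forall>q. 0 < q \<and> q < 1 \<and> \<bar>q - p\<bar> < \<delta> p \<longrightarrow>
           (\<forall>n\<ge>1. \<bar>deriv (phi1 \<tau> \<gamma> n) q\<bar> \<le> K p * (real n * \<rho> p ^ (n - 1)) * (1/q + 1/(1-q))))"
      using t unfolding Bd_def \<delta>_def K_def \<rho>_def by blast
    have cover: "{\<zeta>..\<eta>} \<subseteq> (\<Union>p\<in>{\<zeta>..\<eta>}. ball p (\<delta> p))"
    proof
      fix x assume x: "x \<in> {\<zeta>..\<eta>}"
      then have "x \<in> S" using sub by blast
      then have "\<delta> x > 0" using H by blast
      then show "x \<in> (\<Union>p\<in>{\<zeta>..\<eta>}. ball p (\<delta> p))" by (intro UN_I[OF x]) simp
    qed
    obtain T where T: "T \<subseteq> {\<zeta>..\<eta>}" "finite T" "{\<zeta>..\<eta>} \<subseteq> (\<Union>p\<in>T. ball p (\<delta> p))"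
      by (rule compactE_image[OF compact_Icc _ cover]) auto
    have TS: "T \<subseteq> S" using T sub by auto
    have Tne: "T \<noteq> {}" using T(3) True by auto
    define Km where "Km = Max (K ` T)"
    define \<rho>m where "\<rho>m = Max (\<rho> ` T)"
    have Km: "\<And>p. p \<in> T \<Longrightarrow> K p \<le> Km" using T(2) by (simp add: Km_def)
    have \<rho>m: "\<And>p. p \<in> T \<Longrightarrow> \<rho> p \<le> \<rho>m" using T(2) by (simp add: \<rho>m_def)
    have \<rho>m1: "\<rho>m < 1" using T(2) Tne H TS by (auto simp: \<rho>m_def)
    obtain p0 where p0: "p0 \<in> T" using Tne by blast
    have \<rho>m0: "0 \<le> \<rho>m" using \<rho>m[OF p0] H[of p0] p0 TS by force
    have Km0: "0 \<le> Km" using Km[OF p0] H[of p0] p0 TS by force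
    define Z where "Z = 1/\<zeta> + 1/(1-\<eta>)"
    have bound: "\<bar>deriv (phi1 \<tau> \<gamma> (Suc i)) q\<bar> \<le> Km * Z * (real (Suc i) * \<rho>m ^ i)"
      if q: "q \<in> {\<zeta>..\<eta>}" for q i
    proof -
      obtain p where pT: "p \<in> T" and qb: "q \<in> ball p (\<delta> p)" using T(3) q by blast
      have pS: "p \<in> S" using pT TS by auto
      have q01: "0 < q" "q < 1" using q z by auto
      have "\<bar>q - p\<bar> < \<delta> p" using qb by (simp add: dist_real_def abs_minus_commute)
      then have "\<bar>deriv (phi1 \<tau> \<gamma> (Suc i)) q\<bar> \<le> K p * (real (Suc i) * \<rho> p ^ i) * (1/q + 1/(1-q))"
        using H[OF pS] q01 by fastforce
      also have "\<dots> \<le> Km * (real (Suc i) * \<rho>m ^ i) * Z"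
      proof -
        have h: "0 \<le> K p" "0 \<le> \<rho> p" using H[OF pS] by auto
        have pw: "\<rho> p ^ i \<le> \<rho>m ^ i" using h \<rho>m[OF pT] by (intro power_mono) auto
        have a: "K p * (real (Suc i) * \<rho> p ^ i) \<le> Km * (real (Suc i) * \<rho>m ^ i)"
          using Km[OF pT] pw h Km0 \<rho>m0 by (intro mult_mono mult_left_mono) auto
        have b1: "1/q \<le> 1/\<zeta>" using q z by (intro divide_left_mono) auto
        have b2: "1/(1-q) \<le> 1/(1-\<eta>)" using q z by (intro divide_left_mono) auto
        have b: "1/q + 1/(1-q) \<le> Z" unfolding Z_def using b1 b2 by simp
        show ?thesis by (rule mult_mono[OF a b]) (use q01 Km0 \<rho>m0 in auto)
      qed
      finally show ?thesis by (simp add: mult_ac)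
    qed
    show ?thesis unfolding eqf
    proof (rule Weierstrass_m_test'[where M="\<lambda>i. Km * Z * (real (Suc i) * \<rho>m ^ i)"])
      show "\<And>n x. x \<in> {\<zeta>..\<eta>} \<Longrightarrow> norm (deriv (phi1 \<tau> \<gamma> (Suc n)) x) \<le> Km * Z * (real (Suc n) * \<rho>m ^ n)"
        using bound by simp
      show "summable (\<lambda>i. Km * Z * (real (Suc i) * \<rho>m ^ i))"
        by (intro summable_mult summ_n \<rho>m0 \<rho>m1)
    qed
  qed
qed


end
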